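(* Let $\mathcal{H}$ be an infinite-dimensional Hilbert space, $A$ a self-adjoint operator on $\mathcal{H}$, semi-bounded below, with compact resolvent, eigenvalues $\lambda_1\le\lambda_2\le\dots$ (with multiplicity), and $t\notin\mathrm{Spec}(A)$. Let $\mathcal{L}\subset\mathrm{D}(A)$ be a finite-dimensional subspace, $j\in\mathbb{N}$ and $u\in F_j$. Then, for either choice of sign, \[\mathfrak{a}^2_t(u-P^\pm u,u-P^\pm u)\le\sum_{k=1}^j\left(\llbracket\phi_k-P^\pm\phi_k\rrbracket^\pm_t\right)^2.\]
   Context: For $u,v\in\mathrm{D}(A)$: $\mathfrak{a}^1_t(u,v)=\langle (A-t)u,v\rangle$, $\mathfrak{a}^2_t(u,v)=\langle (A-t)u,(A-t)v\rangle$, $|u|_t=\mathfrak{a}^2_t(u,u)^{1/2}$. Let $\mu^-_1(t)=\inf_{u\ne0}\mathfrak{a}^1_t(u,u)/\mathfrak{a}^2_t(u,u)$, $\mu^+_1(t)=\sup_{u\ne0}\mathfrak{a}^1_t(u,u)/\mathfrak{a}^2_t(u,u)$ (over $u\in\mathrm{D}(A)$), $\mathfrak{b}^-_t=\mathfrak{a}^1_t+(1-\mu^-_1(t))\mathfrak{a}^2_t$, $\mathfrak{b}^+_t=-\mathfrak{a}^1_t+(1+\mu^+_1(t))\mathfrak{a}^2_t$, $\llbracket u\rrbracket^\pm_t=\mathfrak{b}^\pm_t(u,u)^{1/2}$. $P^\pm:\mathrm{D}(A)\to\mathcal{L}$ is the orthogonal projection with respect to the inner product $\mathfrak{b}^\pm_t$.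 $\{\phi_k\}_{k\ge1}$ are eigenvectors, $A\phi_k=\lambda_k\phi_k$, orthonormal in $\mathfrak{a}^2_t$; $E_j=\mathrm{Span}\{\phi_1,\dots,\phi_j\}$ and $F_j=\{u\in E_j:|u|_t=1\}$. *)

theory Defs
  imports "HOL-Analysis.Analysis"
begin

text \<open>A complex Hilbert space is represented by a real Hilbert space (type class
  real_inner + complete_space) together with an orthogonal linear map J with J o J = -id,
  which plays the role of multiplication by the imaginary unit.\<close>

definition complex_structure :: "('a::real_inner \<Rightarrow> 'a) \<Rightarrow> bool" where
  "complex_structure J \<longleftrightarrow> linear J \<and> (\<forall>x. J (J x) = - x) \<and> (\<forall>x y. J x \<bullet> J y = x \<bullet> y)"

definition cscale :: "('a::real_vector \<Rightarrow> 'a) \<Rightarrow> complex \<Rightarrow> 'a \<Rightarrow> 'a" where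
  "cscale J c x = Re c *\<^sub>R x + Im c *\<^sub>R J x"

text \<open>complex inner product, linear in the first and antilinear in the second argument\<close>
definition cinner :: "('a::real_inner \<Rightarrow> 'a) \<Rightarrow> 'a \<Rightarrow> 'a \<Rightarrow> complex" where
  "cinner J x y = Complex (x \<bullet> y) (x \<bullet> J y)"

definition csubspace :: "('a::real_vector \<Rightarrow> 'a) \<Rightarrow> 'a set \<Rightarrow> bool" where
  "csubspace J S \<longleftrightarrow> subspace S \<and> (\<forall>x\<in>S. J x \<in> S)"

definition cspan :: "('a::real_vector \<Rightarrow> 'a) \<Rightarrow> 'a set \<Rightarrow> 'a set" where
  "cspan J S = span (S \<union> J ` S)"

definition finite_dimensional :: "'a::real_vector set \<Rightarrow> bool" where
  "finite_dimensional S \<longleftrightarrow> (\<exists>B. finite B \<and> span B = S)"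

definition clinear_operator :: "('a::real_inner \<Rightarrow> 'a) \<Rightarrow> 'a set \<Rightarrow> ('a \<Rightarrow> 'a) \<Rightarrow> bool" where
  "clinear_operator J D A \<longleftrightarrow> csubspace J D \<and>
     (\<forall>x\<in>D. \<forall>y\<in>D. A (x + y) = A x + A y) \<and>
     (\<forall>x\<in>D. \<forall>c::complex. A (cscale J c x) = cscale J c (A x))"

text \<open>Self-adjoint: densely defined, symmetric, and D(A*) is contained in D(A) (so A* = A).\<close>
definition self_adjoint :: "('a::real_inner \<Rightarrow> 'a) \<Rightarrow> 'a set \<Rightarrow> ('a \<Rightarrow> 'a) \<Rightarrow> bool" where
  "self_adjoint J D A \<longleftrightarrow> clinear_operator J D A \<and> closure D = UNIV \<and>
     (\<forall>u\<in>D. \<forall>v\<in>D. cinner J (A u) v = cinner J u (A v)) \<and>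
     (\<forall>v w. (\<forall>u\<in>D. cinner J (A u) v = cinner J u w) \<longrightarrow> v \<in> D \<and> A v = w)"

definition semibounded_below :: "('a::real_inner \<Rightarrow> 'a) \<Rightarrow> 'a set \<Rightarrow> ('a \<Rightarrow> 'a) \<Rightarrow> bool" where
  "semibounded_below J D A \<longleftrightarrow> (\<exists>c::real. \<forall>u\<in>D. Re (cinner J (A u) u) \<ge> c * (norm u)\<^sup>2)"

definition shifted :: "('a::real_vector \<Rightarrow> 'a) \<Rightarrow> ('a \<Rightarrow> 'a) \<Rightarrow> complex \<Rightarrow> 'a \<Rightarrow> 'a" where
  "shifted J A z u = A u - cscale J z u"

definition resolvent_set :: "('a::real_inner \<Rightarrow> 'a) \<Rightarrow> 'a set \<Rightarrow> ('a \<Rightarrow> 'a) \<Rightarrow> complex set" where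
  "resolvent_set J D A = {z. bij_betw (shifted J A z) D UNIV \<and>
      (\<exists>K. \<forall>u\<in>D. norm u \<le> K * norm (shifted J A z u))}"

definition spectrum_op :: "('a::real_inner \<Rightarrow> 'a) \<Rightarrow> 'a set \<Rightarrow> ('a \<Rightarrow> 'a) \<Rightarrow> complex set" where
  "spectrum_op J D A = - resolvent_set J D A"

definition resolvent :: "('a::real_inner \<Rightarrow> 'a) \<Rightarrow> 'a set \<Rightarrow> ('a \<Rightarrow> 'a) \<Rightarrow> complex \<Rightarrow> 'a \<Rightarrow> 'a" where
  "resolvent J D A z = inv_into D (shifted J A z)"

definition compact_operator :: "('a::real_normed_vector \<Rightarrow> 'a) \<Rightarrow> bool" where
  "compact_operator R \<longleftrightarrow> (\<forall>S. bounded S \<longrightarrow> compact (closure (R ` S)))"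

definition compact_resolvent :: "('a::real_inner \<Rightarrow> 'a) \<Rightarrow> 'a set \<Rightarrow> ('a \<Rightarrow> 'a) \<Rightarrow> bool" where
  "compact_resolvent J D A \<longleftrightarrow>
     (\<exists>z\<in>resolvent_set J D A. compact_operator (resolvent J D A z))"

definition a1 :: "('a::real_inner \<Rightarrow> 'a) \<Rightarrow> ('a \<Rightarrow> 'a) \<Rightarrow> real \<Rightarrow> 'a \<Rightarrow> 'a \<Rightarrow> complex" where
  "a1 J A t u v = cinner J (A u - t *\<^sub>R u) v"

definition a2 :: "('a::real_inner \<Rightarrow> 'a) \<Rightarrow> ('a \<Rightarrow> 'a) \<Rightarrow> real \<Rightarrow> 'a \<Rightarrow> 'a \<Rightarrow> complex" where
  "a2 J A t u v = cinner J (A u - t *\<^sub>R u) (A v - t *\<^sub>R v)"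

definition tnorm :: "('a::real_inner \<Rightarrow> 'a) \<Rightarrow> ('a \<Rightarrow> 'a) \<Rightarrow> real \<Rightarrow> 'a \<Rightarrow> real" where
  "tnorm J A t u = sqrt (Re (a2 J A t u u))"

definition mu_minus :: "('a::real_inner \<Rightarrow> 'a) \<Rightarrow> 'a set \<Rightarrow> ('a \<Rightarrow> 'a) \<Rightarrow> real \<Rightarrow> real" where
  "mu_minus J D A t = Inf {Re (a1 J A t u u) / Re (a2 J A t u u) | u. u \<in> D \<and> u \<noteq> 0}"

definition mu_plus :: "('a::real_inner \<Rightarrow> 'a) \<Rightarrow> 'a set \<Rightarrow> ('a \<Rightarrow> 'a) \<Rightarrow> real \<Rightarrow> real" where
  "mu_plus J D A t = Sup {Re (a1 J A t u u) / Re (a2 J A t u u) | u. u \<in> D \<and> u \<noteq> 0}"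

definition b_minus :: "('a::real_inner \<Rightarrow> 'a) \<Rightarrow> 'a set \<Rightarrow> ('a \<Rightarrow> 'a) \<Rightarrow> real \<Rightarrow> 'a \<Rightarrow> 'a \<Rightarrow> complex" where
  "b_minus J D A t u v = a1 J A t u v + of_real (1 - mu_minus J D A t) * a2 J A t u v"

definition b_plus :: "('a::real_inner \<Rightarrow> 'a) \<Rightarrow> 'a set \<Rightarrow> ('a \<Rightarrow> 'a) \<Rightarrow> real \<Rightarrow> 'a \<Rightarrow> 'a \<Rightarrow> complex" where
  "b_plus J D A t u v = - a1 J A t u v + of_real (1 + mu_plus J D A t) * a2 J A t u v"

definition form_norm :: "('a \<Rightarrow> 'a \<Rightarrow> complex) \<Rightarrow> 'a \<Rightarrow> real" where
  "form_norm b u = sqrt (Re (b u u))"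

definition form_proj :: "('a::real_vector \<Rightarrow> 'a \<Rightarrow> complex) \<Rightarrow> 'a set \<Rightarrow> 'a \<Rightarrow> 'a" where
  "form_proj b L u = (THE p. p \<in> L \<and> (\<forall>l\<in>L. b (u - p) l = 0))"

end

theory Submission
  imports Defs
begin


locale fsetup =
  fixes J :: "'a::real_inner \<Rightarrow> 'a" and D :: "'a set" and T :: "'a \<Rightarrow> 'a" and s c :: real
  assumes Jlin: "linear J" and JJ: "\<And>x. J (J x) = - x" and Jinner: "\<And>x y. J x \<bullet> J y = x \<bullet> y"
  and Dsub: "subspace D" and DJ: "\<And>x. x\<in>D \<Longrightarrow> J x \<in> D"
  and Tadd: "\<And>x y. x\<in>D \<Longrightarrow> y\<in>D \<Longrightarrow> T (x+y) = T x + T y"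
  and Tscale: "\<And>x r. x\<in>D \<Longrightarrow> T (r *\<^sub>R x) = r *\<^sub>R T x"
  and TJ: "\<And>x. x\<in>D \<Longrightarrow> T (J x) = J (T x)"
  and Tsym: "\<And>x y. x\<in>D \<Longrightarrow> y\<in>D \<Longrightarrow> T x \<bullet> y = x \<bullet> T y"
  and Tinj: "\<And>x. x\<in>D \<Longrightarrow> T x = 0 \<Longrightarrow> x = 0"
  and pos: "\<And>x. x\<in>D \<Longrightarrow> s*(T x \<bullet> x) + c*(T x \<bullet> T x) \<ge> T x \<bullet> T x"
begin

definition \<beta> where "\<beta> x y = s*(T x \<bullet> y) + c*(T x \<bullet> T y)"

lemma D0: "0 \<in> D" using Dsub subspace_0 by blast
lemma Dadd: "x\<in>D \<Longrightarrow> y\<in>D \<Longrightarrow> x+y\<in>D" using Dsub subspace_add by blast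
lemma Dscale: "x\<in>D \<Longrightarrow> r *\<^sub>R x\<in>D" using Dsub subspace_scale by blast
lemma Ddiff: "x\<in>D \<Longrightarrow> y\<in>D \<Longrightarrow> x-y\<in>D" using Dsub subspace_diff by blast
lemma Dsum: "finite I \<Longrightarrow> (\<And>i. i\<in>I \<Longrightarrow> f i \<in> D) \<Longrightarrow> sum f I \<in> D"
  using Dsub subspace_sum by blast

lemma T0: "T 0 = 0" using Tscale[OF D0, of 0] by simp
lemma Tneg: "x\<in>D \<Longrightarrow> T (-x) = - T x" using Tscale[of x "-1"] by simp
lemma Tdiff: "x\<in>D \<Longrightarrow> y\<in>D \<Longrightarrow> T (x-y) = T x - T y"
  using Tadd[of x "-y"] Tneg[of y] Dscale[of y "-1"] by simp
lemma Tsum: "finite I \<Longrightarrow> (\<And>i. i\<in>I \<Longrightarrow> f i \<in> D) \<Longrightarrow> T (sum f I) = (\<Sum>i\<in>I. T (f i))"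
proof (induction I rule: finite_induct)
  case empty thus ?case by (simp add: T0)
next
  case (insert x F) thus ?case by (simp add: Tadd Dsum)
qed

lemma Jneg: "J (-x) = - J x" using Jlin by (simp add: linear_neg)
lemma Jdiff: "J (x - y) = J x - J y" using Jlin by (simp add: linear_diff)
lemma Jadd: "J (x + y) = J x + J y" using Jlin by (simp add: linear_add)
lemma Jscale: "J (r *\<^sub>R x) = r *\<^sub>R J x" using Jlin by (simp add: linear_scale)
lemma Jsum: "J (sum f I) = (\<Sum>i\<in>I. J (f i))" using Jlin by (simp add: linear_sum)
lemma inner_J: "x \<bullet> J y = - (J x \<bullet> y)"
  using Jinner[of x "J y"] JJ[of y] by simp
lemma inner_J_self: "x \<bullet> J x = 0"
  using inner_J[of x x] by (simp add: inner_commute)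

lemma \<beta>_sym: "x\<in>D \<Longrightarrow> y\<in>D \<Longrightarrow> \<beta> x y = \<beta> y x"
  unfolding \<beta>_def using Tsym[of x y] Tsym[of y x] by (simp add: inner_commute)
lemma \<beta>_add: "x\<in>D \<Longrightarrow> y\<in>D \<Longrightarrow> \<beta> (x+y) z = \<beta> x z + \<beta> y z"
  unfolding \<beta>_def by (simp add: Tadd inner_add_left algebra_simps)
lemma \<beta>_diff: "x\<in>D \<Longrightarrow> y\<in>D \<Longrightarrow> \<beta> (x-y) z = \<beta> x z - \<beta> y z"
  unfolding \<beta>_def by (simp add: Tdiff inner_diff_left algebra_simps)
lemma \<beta>_scale: "x\<in>D \<Longrightarrow> \<beta> (r *\<^sub>R x) z = r * \<beta> x z"
  unfolding \<beta>_def by (simp add: Tscale algebra_simps)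
lemma \<beta>_add2: "y\<in>D \<Longrightarrow> z\<in>D \<Longrightarrow> \<beta> x (y+z) = \<beta> x y + \<beta> x z"
  unfolding \<beta>_def by (simp add: Tadd inner_add_right algebra_simps)
lemma \<beta>_diff2: "y\<in>D \<Longrightarrow> z\<in>D \<Longrightarrow> \<beta> x (y-z) = \<beta> x y - \<beta> x z"
  unfolding \<beta>_def by (simp add: Tdiff inner_diff_right algebra_simps)
lemma \<beta>_scale2: "y\<in>D \<Longrightarrow> \<beta> x (r *\<^sub>R y) = r * \<beta> x y"
  unfolding \<beta>_def by (simp add: Tscale algebra_simps)
lemma \<beta>_ge: "x\<in>D \<Longrightarrow> T x \<bullet> T x \<le> \<beta> x x"
  unfolding \<beta>_def using pos by simp
lemma \<beta>_nonneg: "x\<in>D \<Longrightarrow> 0 \<le> \<beta> x x"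
  using \<beta>_ge[of x] by (meson inner_ge_zero order_trans)
lemma \<beta>_JJ: "x\<in>D \<Longrightarrow> y\<in>D \<Longrightarrow> \<beta> (J x) (J y) = \<beta> x y"
  unfolding \<beta>_def by (simp add: TJ Jinner)
lemma \<beta>_xJx: "x\<in>D \<Longrightarrow> \<beta> x (J x) = 0"
proof -
  assume x: "x\<in>D"
  have "T x \<bullet> J x = x \<bullet> T (J x)" using Tsym x DJ by blast
  also have "\<dots> = x \<bullet> J (T x)" using TJ x by simp
  also have "\<dots> = - (J x \<bullet> T x)" by (simp add: inner_J)
  finally have "T x \<bullet> J x = 0" using Tsym[OF x DJ[OF x]] by (simp add: inner_commute)
  thus ?thesis unfolding \<beta>_def by (simp add: TJ x inner_J_self)
qed
lemma \<beta>_def_pos: "x\<in>D \<Longrightarrow> \<beta> x x = 0 \<Longrightarrow> x = 0"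
  using \<beta>_ge[of x] Tinj[of x] by (metis inner_eq_zero_iff inner_ge_zero order_antisym)

lemma span_D: "B \<subseteq> D \<Longrightarrow> span B \<subseteq> D"
  using span_minimal Dsub by blast

lemma \<beta>_quad: "x\<in>D \<Longrightarrow> y\<in>D \<Longrightarrow> \<beta> (x - r *\<^sub>R y) (x - r *\<^sub>R y) = \<beta> x x - 2*r*\<beta> x y + r^2 * \<beta> y y"
proof -
  assume x: "x\<in>D" and y: "y\<in>D"
  have ry: "r *\<^sub>R y \<in> D" using Dscale y by blast
  have "\<beta> (x - r *\<^sub>R y) (x - r *\<^sub>R y) = \<beta> x x - \<beta> x (r *\<^sub>R y) - (\<beta> (r *\<^sub>R y) x - \<beta> (r *\<^sub>R y) (r *\<^sub>R y))"
    using x y ry by (simp add: \<beta>_diff \<beta>_diff2)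
  also have "\<dots> = \<beta> x x - 2*r*\<beta> x y + r^2 * \<beta> y y"
    using x y by (simp add: \<beta>_scale \<beta>_scale2 \<beta>_sym[of y x] power2_eq_square algebra_simps)
  finally show ?thesis .
qed

lemma \<beta>_cs: "x\<in>D \<Longrightarrow> y\<in>D \<Longrightarrow> \<beta> x y \<le> sqrt (\<beta> x x) * sqrt (\<beta> y y)"
proof -
  assume x: "x\<in>D" and y: "y\<in>D"
  have q: "0 \<le> \<beta> x x - 2*r*\<beta> x y + r^2 * \<beta> y y" for r
    using \<beta>_quad[OF x y, of r] \<beta>_nonneg[OF Ddiff[OF x Dscale[OF y, where r=r]]] by simp
  show ?thesis
  proof (cases "\<beta> y y > 0")
    case True
    define r where "r = \<beta> x y / \<beta> y y"
    have "0 \<le> \<beta> x x - 2*r*\<beta> x y + r^2 * \<beta> y y" by (rule q)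
    also have "\<dots> = \<beta> x x - (\<beta> x y)^2 / \<beta> y y"
      using True by (simp add: r_def power2_eq_square field_simps)
    finally have "(\<beta> x y)^2 \<le> \<beta> x x * \<beta> y y" using True by (simp add: field_simps)
    hence "sqrt ((\<beta> x y)^2) \<le> sqrt (\<beta> x x * \<beta> y y)" using real_sqrt_le_mono by blast
    thus ?thesis by (simp add: real_sqrt_mult)
  next
    case False
    hence yy: "\<beta> y y = 0" using \<beta>_nonneg[OF y] by simp
    have "\<beta> x y \<le> 0"
    proof (rule ccontr)
      assume "\<not> \<beta> x y \<le> 0"
      hence pos: "\<beta> x y > 0" by simp
      have "0 \<le> \<beta> x x - 2*((\<beta> x x + 1)/(2*\<beta> x y))*\<beta> x y" using q[of "(\<beta> x x + 1)/(2*\<beta> x y)"] yy by simp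
      also have "\<dots> = -1" using pos by (simp add: field_simps)
      finally show False by simp
    qed
    thus ?thesis using \<beta>_nonneg[OF x] \<beta>_nonneg[OF y] by (meson order_trans mult_nonneg_nonneg real_sqrt_ge_zero)
  qed
qed

definition N where "N x = sqrt (\<beta> x x)"

lemma N_nonneg: "x\<in>D \<Longrightarrow> 0 \<le> N x" using \<beta>_nonneg by (simp add: N_def)

lemma N_sq: "x\<in>D \<Longrightarrow> (N x)^2 = \<beta> x x" using \<beta>_nonneg by (simp add: N_def)

lemma N_tri: "x\<in>D \<Longrightarrow> y\<in>D \<Longrightarrow> N (x+y) \<le> N x + N y"
proof -
  assume x: "x\<in>D" and y: "y\<in>D"
  have "\<beta> (x+y) (x+y) = \<beta> x x + 2*\<beta> x y + \<beta> y y"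
    using x y by (simp add: \<beta>_add \<beta>_add2 \<beta>_sym[of y x])
  also have "\<dots> \<le> (N x)^2 + 2 * (N x * N y) + (N y)^2"
    using \<beta>_cs[OF x y] N_sq[OF x] N_sq[OF y] by (simp add: N_def)
  also have "\<dots> = (N x + N y)^2" by (simp add: power2_eq_square algebra_simps)
  finally have "sqrt (\<beta> (x+y) (x+y)) \<le> sqrt ((N x + N y)^2)" using real_sqrt_le_mono by blast
  thus ?thesis using N_nonneg[OF x] N_nonneg[OF y] by (simp add: N_def)
qed

lemma N_sum: "finite I \<Longrightarrow> (\<And>i. i\<in>I \<Longrightarrow> f i \<in> D) \<Longrightarrow> N (sum f I) \<le> (\<Sum>i\<in>I. N (f i))"
proof (induction I rule: finite_induct)
  case empty thus ?case by (simp add: N_def \<beta>_def T0)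
next
  case (insert x F)
  have "N (sum f (insert x F)) = N (f x + sum f F)" using insert by simp
  also have "\<dots> \<le> N (f x) + N (sum f F)" using insert by (intro N_tri) (auto intro: Dsum)
  also have "\<dots> \<le> N (f x) + (\<Sum>i\<in>F. N (f i))" using insert by simp
  finally show ?case using insert by simp
qed

lemma N_J: "v\<in>D \<Longrightarrow> N (a *\<^sub>R v + b *\<^sub>R J v) = sqrt (a^2+b^2) * N v"
proof -
  assume v: "v\<in>D"
  have Jv: "J v \<in> D" using DJ v by blast
  have "\<beta> (a *\<^sub>R v + b *\<^sub>R J v) (a *\<^sub>R v + b *\<^sub>R J v)
      = a*(a*\<beta> v v + b*\<beta> (J v) v) + b*(a*\<beta> v (J v) + b*\<beta> (J v) (J v))"
    using v Jv Dscale by (simp add: \<beta>_add \<beta>_add2 \<beta>_scale \<beta>_scale2)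
  also have "\<dots> = (a^2+b^2) * \<beta> v v"
    using v Jv \<beta>_xJx[OF v] \<beta>_sym[OF Jv v] \<beta>_JJ[OF v v] by (simp add: power2_eq_square algebra_simps)
  finally show ?thesis by (simp add: N_def real_sqrt_mult)
qed

lemma proj_exists:
  assumes "finite B" "B \<subseteq> D"
  shows "\<forall>u\<in>D. \<exists>p\<in>span B. \<forall>l\<in>span B. \<beta> (u-p) l = 0"
  using assms
proof (induction B rule: finite_induct)
  case empty thus ?case by (auto simp: \<beta>_def T0)
next
  case (insert b B)
  have BD: "span B \<subseteq> D" using insert span_D by blast
  have bD: "b \<in> D" using insert by blast
  from insert obtain q where q: "q\<in>span B" "\<forall>l\<in>span B. \<beta> (b-q) l = 0" using bD by blast
  define e where "e = b - q"
  have eD: "e\<in>D" using e_def bD q BD Ddiff by blast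
  show ?case
  proof
    fix u assume u: "u\<in>D"
    from insert obtain p where p: "p\<in>span B" "\<forall>l\<in>span B. \<beta> (u-p) l = 0" using u by blast
    have pD: "p\<in>D" using p BD by blast
    define \<kappa> where "\<kappa> = (if \<beta> e e = 0 then 0 else \<beta> (u-p) e / \<beta> e e)"
    have \<kappa>: "\<kappa> * \<beta> e e = \<beta> (u-p) e"
    proof (cases "\<beta> e e = 0")
      case True hence "e = 0" using \<beta>_def_pos eD by blast
      thus ?thesis using True by (simp add: \<kappa>_def \<beta>_def T0)
    qed (simp add: \<kappa>_def)
    define p' where "p' = p + \<kappa> *\<^sub>R e"
    have sub: "span B \<subseteq> span (insert b B)" by (simp add: span_mono subset_insertI)
    have "e \<in> span (insert b B)" unfolding e_def using q sub
      by (meson insertI1 span_base span_diff subsetD)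
    hence p'S: "p' \<in> span (insert b B)" unfolding p'_def using p sub
      by (meson span_add span_scale subsetD)
    have up'D: "u - p' \<in> D" using u pD eD p'_def by (simp add: Ddiff Dadd Dscale)
    have "\<beta> (u-p') l = 0" if l: "l \<in> span (insert b B)" for l
    proof -
      obtain k where k: "l - k *\<^sub>R b \<in> span B" using l span_insert[of b B] by auto
      define m where "m = l - k *\<^sub>R b + k *\<^sub>R q"
      have mS: "m \<in> span B" using k q m_def by (simp add: span_add span_scale)
      have mD: "m \<in> D" using mS BD by blast
      have lm: "l = m + k *\<^sub>R e" by (simp add: m_def e_def algebra_simps)
      have "\<beta> (u-p') m = \<beta> (u-p) m - \<kappa> * \<beta> e m"
        unfolding p'_def using u pD eD Dscale
        by (simp add: diff_add_eq_diff_diff_swap \<beta>_diff Ddiff \<beta>_scale)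
      also have "\<beta> e m = 0" using q mS e_def by blast
      also have "\<beta> (u-p) m = 0" using p mS by blast
      finally have 1: "\<beta> (u-p') m = 0" by simp
      have "\<beta> (u-p') e = \<beta> (u-p) e - \<kappa> * \<beta> e e"
        unfolding p'_def using u pD eD Dscale
        by (simp add: diff_add_eq_diff_diff_swap \<beta>_diff Ddiff \<beta>_scale)
      hence 2: "\<beta> (u-p') e = 0" using \<kappa> by simp
      show ?thesis using 1 2 lm mD eD Dscale by (simp add: \<beta>_add2 \<beta>_scale2)
    qed
    thus "\<exists>p\<in>span (insert b B). \<forall>l\<in>span (insert b B). \<beta> (u-p) l = 0" using p'S by blast
  qed
qed

context
  fixes b :: "'a \<Rightarrow> 'a \<Rightarrow> complex" and L :: "'a set"
  assumes bRe: "\<And>x y. x\<in>D \<Longrightarrow> y\<in>D \<Longrightarrow> Re (b x y) = \<beta> x y"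
  and bIm: "\<And>x y. x\<in>D \<Longrightarrow> y\<in>D \<Longrightarrow> Im (b x y) = \<beta> x (J y)"
  and Lsub: "subspace L" and LJ: "\<And>x. x\<in>L \<Longrightarrow> J x \<in> L" and LD: "L \<subseteq> D"
  and Lfin: "finite_dimensional L"
begin

lemma proj_prop:
  assumes x: "x\<in>D"
  shows "form_proj b L x \<in> L \<and> (\<forall>l\<in>L. \<beta> (x - form_proj b L x) l = 0)"
proof -
  obtain B where B: "finite B" "span B = L" using Lfin unfolding finite_dimensional_def by blast
  have BD: "B \<subseteq> D" using B LD span_superset by blast
  obtain p where p: "p \<in> L" "\<forall>l\<in>L. \<beta> (x-p) l = 0" using proj_exists[OF B(1) BD] x B(2) by blast
  have pD: "p\<in>D" using p LD by blast
  have xpD: "x - p \<in> D" using x pD Ddiff by blast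
  have ex: "p \<in> L \<and> (\<forall>l\<in>L. b (x-p) l = 0)"
  proof (intro conjI ballI)
    fix l assume l: "l\<in>L"
    have lD: "l\<in>D" "J l \<in> D" using l LD LJ by blast+
    show "b (x-p) l = 0"
    proof -
      have "Re (b (x-p) l) = 0" using bRe[OF xpD lD(1)] p(2) l by simp
      moreover have "Im (b (x-p) l) = 0" using bIm[OF xpD lD(1)] p(2) LJ[OF l] by simp
      ultimately show ?thesis by (simp add: complex_eq_iff)
    qed
  qed (rule p(1))
  have un: "p2 = p" if p2: "p2 \<in> L \<and> (\<forall>l\<in>L. b (x-p2) l = 0)" for p2
  proof -
    have p2D: "p2\<in>D" using p2 LD by blast
    have xp2D: "x - p2 \<in> D" using x p2D Ddiff by blast
    have dL: "p - p2 \<in> L" using p(1) p2 Lsub subspace_diff by blast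
    have dD: "p - p2 \<in> D" using dL LD by blast
    have "\<beta> (x-p2) (p-p2) = 0" using p2 dL bRe[OF xp2D dD] by simp
    moreover have "\<beta> (x-p) (p-p2) = 0" using p(2) dL by blast
    ultimately have "\<beta> ((x-p2) - (x-p)) (p-p2) = 0" using \<beta>_diff[OF xp2D xpD] by simp
    moreover have "(x-p2) - (x-p) = p - p2" by simp
    ultimately have "\<beta> (p-p2) (p-p2) = 0" by metis
    thus ?thesis using \<beta>_def_pos[OF dD] by simp
  qed
  have "form_proj b L x = p" unfolding form_proj_def using ex un by (rule the_equality)
  thus ?thesis using p by simp
qed

lemma proj_min:
  assumes x: "x\<in>D" and l: "l\<in>L"
  shows "\<beta> (x - form_proj b L x) (x - form_proj b L x) \<le> \<beta> (x - l) (x - l)"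
proof -
  define p where "p = form_proj b L x"
  have p: "p \<in> L" "\<forall>l\<in>L. \<beta> (x - p) l = 0" using proj_prop[OF x] p_def by auto
  have mL: "p - l \<in> L" using p(1) l Lsub subspace_diff by blast
  have mD: "p - l \<in> D" using mL LD by blast
  have rD: "x - p \<in> D" using x p(1) LD Ddiff by blast
  have "\<beta> ((x - p) + (p - l)) ((x - p) + (p - l)) = \<beta> (x-p) (x-p) + 2 * \<beta> (x-p) (p-l) + \<beta> (p-l) (p-l)"
    unfolding \<beta>_add[OF rD mD] \<beta>_add2[OF rD mD] using \<beta>_sym[OF mD rD] by simp
  moreover have "(x - p) + (p - l) = x - l" by simp
  ultimately have "\<beta> (x - l) (x - l) = \<beta> (x-p) (x-p) + 2 * \<beta> (x-p) (p-l) + \<beta> (p-l) (p-l)" by metis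
  also have "\<dots> = \<beta> (x-p) (x-p) + \<beta> (p-l) (p-l)" using p(2) mL by simp
  finally show ?thesis using \<beta>_nonneg[OF mD] p_def by simp
qed

end

lemma span_rep:
  fixes \<phi> :: "nat \<Rightarrow> 'a" and j :: nat
  assumes u: "u \<in> span (\<phi> ` {1..j} \<union> J ` \<phi> ` {1..j})"
  shows "\<exists>a b. u = (\<Sum>k=1..j. a k *\<^sub>R \<phi> k + b k *\<^sub>R J (\<phi> k))"
proof -
  define V where "V = {v. \<exists>a b. v = (\<Sum>k=1..j. a k *\<^sub>R \<phi> k + b k *\<^sub>R J (\<phi> k))}"
  have "subspace V" unfolding subspace_def
  proof (intro conjI allI ballI impI)
    show "0 \<in> V" unfolding V_def by (rule CollectI, rule exI[of _ "\<lambda>_. 0"], rule exI[of _ "\<lambda>_. 0"]) simp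
  next
    fix x y assume "x\<in>V" "y\<in>V"
    then obtain a b a' b' where "x = (\<Sum>k=1..j. a k *\<^sub>R \<phi> k + b k *\<^sub>R J (\<phi> k))"
      "y = (\<Sum>k=1..j. a' k *\<^sub>R \<phi> k + b' k *\<^sub>R J (\<phi> k))" unfolding V_def by blast
    hence e: "x + y = (\<Sum>k=1..j. (a k + a' k) *\<^sub>R \<phi> k + (b k + b' k) *\<^sub>R J (\<phi> k))"
      by (simp add: sum.distrib scaleR_add_left algebra_simps)
    show "x + y \<in> V" unfolding V_def by (intro CollectI exI, rule e)
  next
    fix r :: real and x assume "x\<in>V"
    then obtain a b where "x = (\<Sum>k=1..j. a k *\<^sub>R \<phi> k + b k *\<^sub>R J (\<phi> k))" unfolding V_def by blast
    hence e: "r *\<^sub>R x = (\<Sum>k=1..j. (r * a k) *\<^sub>R \<phi> k + (r * b k) *\<^sub>R J (\<phi> k))"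
      by (simp add: scaleR_sum_right scaleR_add_right)
    show "r *\<^sub>R x \<in> V" unfolding V_def by (intro CollectI exI, rule e)
  qed
  moreover have "\<phi> ` {1..j} \<union> J ` \<phi> ` {1..j} \<subseteq> V"
  proof
    fix v assume "v \<in> \<phi> ` {1..j} \<union> J ` \<phi> ` {1..j}"
    then obtain i where i: "i\<in>{1..j}" "v = \<phi> i \<or> v = J (\<phi> i)" by blast
    show "v \<in> V"
    proof (cases "v = \<phi> i")
      case True
      have "(\<Sum>k=1..j. (if k = i then 1 else 0) *\<^sub>R \<phi> k + 0 *\<^sub>R J (\<phi> k)) = (\<Sum>k=1..j. if k = i then \<phi> k else 0)"
        by (rule sum.cong) auto
      also have "\<dots> = v" using True i by (simp add: sum.delta sum.delta')
      finally have e: "v = (\<Sum>k=1..j. (if k = i then 1 else 0) *\<^sub>R \<phi> k + (\<lambda>_. 0) k *\<^sub>R J (\<phi> k))" by simp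
      show ?thesis unfolding V_def by (intro CollectI exI, rule e)
    next
      case False
      hence "v = J (\<phi> i)" using i by blast
      have "(\<Sum>k=1..j. 0 *\<^sub>R \<phi> k + (if k = i then 1 else 0) *\<^sub>R J (\<phi> k)) = (\<Sum>k=1..j. if k = i then J (\<phi> k) else 0)"
        by (rule sum.cong) auto
      also have "\<dots> = v" using \<open>v = J (\<phi> i)\<close> i by (simp add: sum.delta sum.delta')
      finally have e: "v = (\<Sum>k=1..j. (\<lambda>_. 0) k *\<^sub>R \<phi> k + (if k = i then 1 else 0) *\<^sub>R J (\<phi> k))" by simp
      show ?thesis unfolding V_def by (intro CollectI exI, rule e)
    qed
  qed
  ultimately have "span (\<phi> ` {1..j} \<union> J ` \<phi> ` {1..j}) \<subseteq> V" using span_minimal by blast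
  thus ?thesis using u unfolding V_def by blast
qed

context
  fixes b :: "'a \<Rightarrow> 'a \<Rightarrow> complex" and L :: "'a set"
  assumes bRe: "\<And>x y. x\<in>D \<Longrightarrow> y\<in>D \<Longrightarrow> Re (b x y) = \<beta> x y"
  and bIm: "\<And>x y. x\<in>D \<Longrightarrow> y\<in>D \<Longrightarrow> Im (b x y) = \<beta> x (J y)"
  and Lsub: "subspace L" and LJ: "\<And>x. x\<in>L \<Longrightarrow> J x \<in> L" and LD: "L \<subseteq> D"
  and Lfin: "finite_dimensional L"
begin

lemma main_gen:
  fixes \<phi> :: "nat \<Rightarrow> 'a" and j :: nat and u :: 'a
  assumes phiD: "\<And>k. k\<ge>1 \<Longrightarrow> \<phi> k \<in> D"
  and on1: "\<And>k l. k\<ge>1 \<Longrightarrow> l\<ge>1 \<Longrightarrow> T (\<phi> k) \<bullet> T (\<phi> l) = (if k=l then 1 else 0)"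
  and on2: "\<And>k l. k\<ge>1 \<Longrightarrow> l\<ge>1 \<Longrightarrow> T (\<phi> k) \<bullet> J (T (\<phi> l)) = 0"
  and u: "u \<in> span (\<phi>`{1..j} \<union> J`\<phi>`{1..j})" and un: "T u \<bullet> T u = 1"
  shows "T (u - form_proj b L u) \<bullet> T (u - form_proj b L u)
          \<le> (\<Sum>k=1..j. (form_norm b (\<phi> k - form_proj b L (\<phi> k)))\<^sup>2)"
proof -
  let ?P = "form_proj b L"
  define Q where "Q x = x - ?P x" for x
  have PL: "?P x \<in> L" if "x\<in>D" for x using proj_prop[OF bRe bIm Lsub LJ LD Lfin that] by blast
  have PD: "?P x \<in> D" if "x\<in>D" for x using PL[OF that] LD by blast
  have QD: "Q x \<in> D" if "x\<in>D" for x using Q_def PD[OF that] that Ddiff by simp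
  obtain a bb where ab: "u = (\<Sum>k=1..j. a k *\<^sub>R \<phi> k + bb k *\<^sub>R J (\<phi> k))" using span_rep[OF u] by (elim exE) simp
  have phiD': "\<phi> k \<in> D" "J (\<phi> k) \<in> D" if "k\<in>{1..j}" for k using phiD DJ that by auto
  have "\<phi>`{1..j} \<union> J`\<phi>`{1..j} \<subseteq> D" using phiD' by auto
  hence uD: "u \<in> D" using u span_D by blast
  define e where "e k = T (\<phi> k)" for k
  have Tu: "T u = (\<Sum>k=1..j. a k *\<^sub>R e k + bb k *\<^sub>R J (e k))"
    unfolding ab by (subst Tsum) (auto simp: Tadd Tscale TJ phiD' Dscale Dadd e_def)
  have ee: "e k \<bullet> e l = (if k = l then 1 else 0)" "J (e k) \<bullet> e l = 0" "e k \<bullet> J (e l) = 0"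
     "J (e k) \<bullet> J (e l) = (if k = l then 1 else 0)"
    if "k\<in>{1..j}" "l\<in>{1..j}" for k l
    using on1[of k l] on2[of l k] on2[of k l] that unfolding e_def by (auto simp: inner_commute Jinner)
  have c1: "T u \<bullet> e l = a l" if l: "l\<in>{1..j}" for l
  proof -
    have "T u \<bullet> e l = (\<Sum>k=1..j. a k * (e k \<bullet> e l) + bb k * (J (e k) \<bullet> e l))"
      by (simp add: Tu inner_sum_left inner_add_left)
    also have "\<dots> = (\<Sum>k=1..j. if k = l then a k else 0)" by (rule sum.cong) (use ee l in auto)
    also have "\<dots> = a l" using l by (subst sum.delta) auto
    finally show ?thesis .
  qed
  have c2: "T u \<bullet> J (e l) = bb l" if l: "l\<in>{1..j}" for l
  proof -
    have "T u \<bullet> J (e l) = (\<Sum>k=1..j. a k * (e k \<bullet> J (e l)) + bb k * (J (e k) \<bullet> J (e l)))"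
      by (simp add: Tu inner_sum_left inner_add_left)
    also have "\<dots> = (\<Sum>k=1..j. if k = l then bb k else 0)" by (rule sum.cong) (use ee l in auto)
    also have "\<dots> = bb l" using l by (subst sum.delta) auto
    finally show ?thesis .
  qed
  have norm1: "(\<Sum>k=1..j. (a k)\<^sup>2 + (bb k)\<^sup>2) = 1"
  proof -
    have "1 = T u \<bullet> T u" using un by simp
    also have "\<dots> = (\<Sum>k=1..j. a k * (T u \<bullet> e k) + bb k * (T u \<bullet> J (e k)))"
      by (subst (2) Tu) (simp add: inner_sum_right inner_add_right)
    also have "\<dots> = (\<Sum>k=1..j. (a k)\<^sup>2 + (bb k)\<^sup>2)" by (rule sum.cong) (simp_all add: c1 c2 power2_eq_square)
    finally show ?thesis by simp
  qed
  define l0 where "l0 = (\<Sum>k=1..j. a k *\<^sub>R ?P (\<phi> k) + bb k *\<^sub>R J (?P (\<phi> k)))"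
  have l0L: "l0 \<in> L" unfolding l0_def
    by (rule subspace_sum[OF Lsub]) (use PL phiD' LJ Lsub in \<open>auto intro!: subspace_add subspace_scale\<close>)
  define w where "w k = a k *\<^sub>R Q (\<phi> k) + bb k *\<^sub>R J (Q (\<phi> k))" for k
  have wD: "w k \<in> D" if "k\<in>{1..j}" for k
    unfolding w_def using QD phiD' that DJ by (auto intro!: Dadd Dscale)
  have ul0: "u - l0 = (\<Sum>k=1..j. w k)"
  proof -
    have "(\<Sum>k=1..j. w k) = (\<Sum>k=1..j. (a k *\<^sub>R \<phi> k + bb k *\<^sub>R J (\<phi> k)) - (a k *\<^sub>R ?P (\<phi> k) + bb k *\<^sub>R J (?P (\<phi> k))))"
      by (rule sum.cong) (simp_all add: w_def Q_def Jdiff algebra_simps)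
    also have "\<dots> = u - l0" unfolding ab l0_def by (rule sum_subtractf)
    finally show ?thesis by simp
  qed
  have ul0D: "u - l0 \<in> D" using uD l0L LD Ddiff by blast
  have QuD: "Q u \<in> D" using QD uD by blast
  have "T (Q u) \<bullet> T (Q u) \<le> \<beta> (Q u) (Q u)" using \<beta>_ge[OF QuD] .
  also have "\<dots> \<le> \<beta> (u - l0) (u - l0)" unfolding Q_def by (rule proj_min[OF bRe bIm Lsub LJ LD Lfin uD l0L])
  also have "\<dots> = (N (u - l0))\<^sup>2" using N_sq[OF ul0D] by simp
  also have "\<dots> \<le> (\<Sum>k=1..j. N (w k))\<^sup>2"
    by (rule power_mono) (use N_sum[of "{1..j}" w] wD ul0 N_nonneg[OF ul0D] in auto)
  also have "(\<Sum>k=1..j. N (w k)) = (\<Sum>k=1..j. sqrt ((a k)\<^sup>2 + (bb k)\<^sup>2) * N (Q (\<phi> k)))"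
    by (rule sum.cong) (use N_J QD phiD' in \<open>auto simp: w_def\<close>)
  also have "(\<dots>)\<^sup>2 \<le> (\<Sum>k=1..j. (sqrt ((a k)\<^sup>2 + (bb k)\<^sup>2))\<^sup>2) * (\<Sum>k=1..j. (N (Q (\<phi> k)))\<^sup>2)"
    by (rule Cauchy_Schwarz_ineq_sum)
  also have "(\<Sum>k=1..j. (sqrt ((a k)\<^sup>2 + (bb k)\<^sup>2))\<^sup>2) = 1" using norm1 by simp
  also have "(\<Sum>k=1..j. (N (Q (\<phi> k)))\<^sup>2) = (\<Sum>k=1..j. (form_norm b (\<phi> k - ?P (\<phi> k)))\<^sup>2)"
    by (rule sum.cong) (use bRe QD phiD' in \<open>auto simp: N_def form_norm_def Q_def\<close>)
  finally show ?thesis by (simp add: Q_def)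
qed

end

end
lemma lemma4p3_aux:
  fixes J :: "'a::{real_inner, complete_space} \<Rightarrow> 'a"
    and D :: "'a set" and A :: "'a \<Rightarrow> 'a"
    and lam :: "nat \<Rightarrow> real" and \<phi> :: "nat \<Rightarrow> 'a"
    and t :: real and L :: "'a set" and j :: nat and u :: 'a
    and s c :: real and b :: "'a \<Rightarrow> 'a \<Rightarrow> complex"
  assumes J: "complex_structure J"
    and sa: "self_adjoint J D A"
    and eig: "\<And>k. k \<ge> 1 \<Longrightarrow> \<phi> k \<in> D \<and> A (\<phi> k) = lam k *\<^sub>R \<phi> k"
    and orth: "\<And>k l. k \<ge> 1 \<Longrightarrow> l \<ge> 1 \<Longrightarrow>
                 a2 J A t (\<phi> k) (\<phi> l) = (if k = l then 1 else 0)"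
    and t_notin: "complex_of_real t \<notin> spectrum_op J D A"
    and L: "csubspace J L" "finite_dimensional L" "L \<subseteq> D"
    and u: "u \<in> cspan J (\<phi> ` {1..j})" "tnorm J A t u = 1"
    and sc: "(s = 1 \<and> c = 1 - mu_minus J D A t \<and> b = b_minus J D A t) \<or>
             (s = -1 \<and> c = 1 + mu_plus J D A t \<and> b = b_plus J D A t)"
  shows "Re (a2 J A t (u - form_proj b L u) (u - form_proj b L u))
           \<le> (\<Sum>k=1..j. (form_norm b (\<phi> k - form_proj b L (\<phi> k)))\<^sup>2)"
proof -
  define T where "T x = A x - t *\<^sub>R x" for x
  have Jlin: "linear J" and JJ: "\<And>x. J (J x) = - x" and Jinner: "\<And>x y. J x \<bullet> J y = x \<bullet> y"
    using J unfolding complex_structure_def by auto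
  have clin: "clinear_operator J D A" using sa unfolding self_adjoint_def by blast
  have sym: "\<And>u v. u\<in>D \<Longrightarrow> v\<in>D \<Longrightarrow> cinner J (A u) v = cinner J u (A v)"
    using sa unfolding self_adjoint_def by blast
  have Dsub: "subspace D" and DJ: "\<And>x. x\<in>D \<Longrightarrow> J x \<in> D"
    and Aadd: "\<And>x y. x\<in>D \<Longrightarrow> y\<in>D \<Longrightarrow> A (x+y) = A x + A y"
    and Ac: "\<And>x c. x\<in>D \<Longrightarrow> A (cscale J c x) = cscale J c (A x)"
    using clin unfolding clinear_operator_def csubspace_def by auto
  have Tadd: "\<And>x y. x\<in>D \<Longrightarrow> y\<in>D \<Longrightarrow> T (x+y) = T x + T y"
    by (simp add: T_def Aadd scaleR_add_right)
  have Ascale: "A (r *\<^sub>R x) = r *\<^sub>R A x" if "x\<in>D" for x r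
    using Ac[OF that, of "complex_of_real r"] by (simp add: cscale_def)
  have Tscale: "\<And>x r. x\<in>D \<Longrightarrow> T (r *\<^sub>R x) = r *\<^sub>R T x"
    by (simp add: T_def Ascale scaleR_diff_right)
  have AJ: "A (J x) = J (A x)" if "x\<in>D" for x
    using Ac[OF that, of \<i>] by (simp add: cscale_def)
  have TJ: "\<And>x. x\<in>D \<Longrightarrow> T (J x) = J (T x)"
    using Jlin by (simp add: T_def AJ linear_diff linear_scale)
  have Tsym: "\<And>x y. x\<in>D \<Longrightarrow> y\<in>D \<Longrightarrow> T x \<bullet> y = x \<bullet> T y"
  proof -
    fix x y assume "x\<in>D" "y\<in>D"
    hence "A x \<bullet> y = x \<bullet> A y" using sym[of x y] by (simp add: cinner_def)
    thus "T x \<bullet> y = x \<bullet> T y" by (simp add: T_def inner_diff_left inner_diff_right inner_commute)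
  qed
  have D0: "0 \<in> D" using Dsub subspace_0 by blast
  have A0: "A 0 = 0" using Aadd[OF D0 D0] by simp
  have sh: "shifted J A (complex_of_real t) x = T x" for x
    by (simp add: shifted_def cscale_def T_def)
  have sh': "shifted J A (complex_of_real t) = T" by (rule ext) (rule sh)
  have res: "complex_of_real t \<in> resolvent_set J D A" using t_notin unfolding spectrum_op_def by simp
  hence bij: "bij_betw T D UNIV" and "\<exists>K. \<forall>u\<in>D. norm u \<le> K * norm (T u)"
    using sh' unfolding resolvent_set_def by auto
  then obtain K where K: "\<And>u. u\<in>D \<Longrightarrow> norm u \<le> K * norm (T u)" by blast
  have Tinj: "\<And>x. x\<in>D \<Longrightarrow> T x = 0 \<Longrightarrow> x = 0"
  proof -
    fix x assume x: "x\<in>D" "T x = 0"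
    have "T 0 = 0" by (simp add: T_def A0)
    thus "x = 0" using bij x D0 unfolding bij_betw_def inj_on_def by metis
  qed
  define R where "R = {Re (a1 J A t u u) / Re (a2 J A t u u) | u. u \<in> D \<and> u \<noteq> 0}"
  have Rel: "(T x \<bullet> x) / (T x \<bullet> T x) \<in> R" if "x\<in>D" "x\<noteq>0" for x
    unfolding R_def using that by (auto simp: a1_def a2_def cinner_def T_def)
  have Rb: "\<bar>r\<bar> \<le> \<bar>K\<bar>" if "r\<in>R" for r
  proof -
    obtain x where x: "x\<in>D" "x\<noteq>0" "r = (T x \<bullet> x) / (T x \<bullet> T x)"
      using \<open>r\<in>R\<close> unfolding R_def by (auto simp: a1_def a2_def cinner_def T_def)
    have "T x \<noteq> 0" using Tinj x by blast
    hence pos: "norm (T x) > 0" by simp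
    have "\<bar>T x \<bullet> x\<bar> \<le> norm (T x) * norm x" by (rule Cauchy_Schwarz_ineq2)
    moreover have "norm x \<le> \<bar>K\<bar> * norm (T x)"
      using K[OF x(1)] by (meson abs_ge_self mult_right_mono norm_ge_zero order_trans)
    ultimately have "\<bar>T x \<bullet> x\<bar> \<le> norm (T x) * (\<bar>K\<bar> * norm (T x))"
      by (meson mult_left_mono norm_ge_zero order_trans)
    hence 1: "\<bar>T x \<bullet> x\<bar> \<le> \<bar>K\<bar> * (norm (T x))\<^sup>2" by (simp add: power2_eq_square mult_ac)
    have 2: "T x \<bullet> T x = (norm (T x))\<^sup>2" by (simp add: power2_norm_eq_inner)
    have 3: "(norm (T x))\<^sup>2 > 0" using pos by simp
    have "\<bar>r\<bar> = \<bar>T x \<bullet> x\<bar> / (norm (T x))\<^sup>2" using x(3) 2 by (simp add: abs_divide)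
    also have "\<dots> \<le> \<bar>K\<bar>" using 1 3 by (simp add: divide_le_eq)
    finally show ?thesis .
  qed
  have bddb: "bdd_below R"
  proof (rule bdd_belowI)
    fix r assume "r\<in>R" thus "- \<bar>K\<bar> \<le> r" using Rb[of r] by linarith
  qed
  have bdda: "bdd_above R"
  proof (rule bdd_aboveI)
    fix r assume "r\<in>R" thus "r \<le> \<bar>K\<bar>" using Rb[of r] by linarith
  qed
  have mum: "mu_minus J D A t = Inf R" and mup: "mu_plus J D A t = Sup R"
    unfolding mu_minus_def mu_plus_def R_def by simp_all
  have pos: "\<And>x. x\<in>D \<Longrightarrow> s*(T x \<bullet> x) + c*(T x \<bullet> T x) \<ge> T x \<bullet> T x"
  proof -
    fix x assume x: "x\<in>D"
    show "s*(T x \<bullet> x) + c*(T x \<bullet> T x) \<ge> T x \<bullet> T x"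
    proof (cases "x = 0")
      case True thus ?thesis by (simp add: T_def A0)
    next
      case False
      have "T x \<noteq> 0" using Tinj x False by blast
      hence p: "T x \<bullet> T x > 0" by simp
      have r: "(T x \<bullet> x) / (T x \<bullet> T x) \<in> R" using Rel x False by blast
      have "Inf R \<le> (T x \<bullet> x) / (T x \<bullet> T x)" using cInf_lower[OF r bddb] .
      hence m: "Inf R * (T x \<bullet> T x) \<le> T x \<bullet> x" using p by (simp add: le_divide_eq)
      have "(T x \<bullet> x) / (T x \<bullet> T x) \<le> Sup R" using cSup_upper[OF r bdda] .
      hence M: "T x \<bullet> x \<le> Sup R * (T x \<bullet> T x)" using p by (simp add: divide_le_eq)
      from sc show ?thesis
      proof
        assume "s = 1 \<and> c = 1 - mu_minus J D A t \<and> b = b_minus J D A t"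
        hence "s = 1" "c = 1 - Inf R" using mum by auto
        hence "s*(T x \<bullet> x) + c*(T x \<bullet> T x) = T x \<bullet> x + T x \<bullet> T x - Inf R * (T x \<bullet> T x)"
          by (simp add: left_diff_distrib)
        thus ?thesis using m by linarith
      next
        assume "s = -1 \<and> c = 1 + mu_plus J D A t \<and> b = b_plus J D A t"
        hence "s = -1" "c = 1 + Sup R" using mup by auto
        hence "s*(T x \<bullet> x) + c*(T x \<bullet> T x) = - (T x \<bullet> x) + T x \<bullet> T x + Sup R * (T x \<bullet> T x)"
          by (simp add: distrib_right)
        thus ?thesis using M by linarith
      qed
    qed
  qed
  interpret m: fsetup J D T s c
    by (rule fsetup.intro[OF Jlin JJ Jinner Dsub DJ Tadd Tscale TJ Tsym Tinj pos])
  have bRe: "\<And>x y. x\<in>D \<Longrightarrow> y\<in>D \<Longrightarrow> Re (b x y) = m.\<beta> x y"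
    using sc by (auto simp: m.\<beta>_def b_minus_def b_plus_def a1_def a2_def cinner_def T_def)
  have bIm: "\<And>x y. x\<in>D \<Longrightarrow> y\<in>D \<Longrightarrow> Im (b x y) = m.\<beta> x (J y)"
    using sc by (auto simp: m.\<beta>_def b_minus_def b_plus_def a1_def a2_def cinner_def TJ T_def[symmetric])
  have Lsub: "subspace L" and LJ: "\<And>x. x\<in>L \<Longrightarrow> J x \<in> L" using L(1) unfolding csubspace_def by auto
  have phiD: "\<And>k. k\<ge>1 \<Longrightarrow> \<phi> k \<in> D" using eig by blast
  have on: "T (\<phi> k) \<bullet> T (\<phi> l) = (if k=l then 1 else 0) \<and> T (\<phi> k) \<bullet> J (T (\<phi> l)) = 0"
    if "k\<ge>1" "l\<ge>1" for k l
    using arg_cong[OF orth[OF that], of Re] arg_cong[OF orth[OF that], of Im]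
    by (cases "k=l") (simp_all add: a2_def cinner_def T_def)
  have uu: "u \<in> span (\<phi>`{1..j} \<union> J`\<phi>`{1..j})" using u(1) unfolding cspan_def .
  have "sqrt (T u \<bullet> T u) = 1" using u(2) unfolding tnorm_def a2_def cinner_def T_def by simp
  hence un: "T u \<bullet> T u = 1" by simp
  have "T (u - form_proj b L u) \<bullet> T (u - form_proj b L u)
          \<le> (\<Sum>k=1..j. (form_norm b (\<phi> k - form_proj b L (\<phi> k)))\<^sup>2)"
    by (rule m.main_gen[OF bRe bIm Lsub LJ L(3) L(2) phiD _ _ uu un]) (use on in auto)
  thus ?thesis by (simp add: a2_def cinner_def T_def)
qed


theorem lemma4p3:
  fixes J :: "'a::{real_inner, complete_space} \<Rightarrow> 'a"
    and D :: "'a set" and A :: "'a \<Rightarrow> 'a"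
    and lam :: "nat \<Rightarrow> real" and \<phi> :: "nat \<Rightarrow> 'a"
    and t :: real and L :: "'a set" and j :: nat and u :: 'a
  assumes J: "complex_structure J"
    and inf_dim: "\<not> finite_dimensional (UNIV :: 'a set)"
    and sa: "self_adjoint J D A"
    and sb: "semibounded_below J D A"
    and cr: "compact_resolvent J D A"
    and eig: "\<And>k. k \<ge> 1 \<Longrightarrow> \<phi> k \<in> D \<and> A (\<phi> k) = lam k *\<^sub>R \<phi> k"
    and lam_mono: "\<And>k. k \<ge> 1 \<Longrightarrow> lam k \<le> lam (Suc k)"
    and orth: "\<And>k l. k \<ge> 1 \<Longrightarrow> l \<ge> 1 \<Longrightarrow>
                 a2 J A t (\<phi> k) (\<phi> l) = (if k = l then 1 else 0)"
    and complete: "closure (cspan J (\<phi> ` {1..})) = UNIV"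
    and t_notin: "complex_of_real t \<notin> spectrum_op J D A"
    and L: "csubspace J L" "finite_dimensional L" "L \<subseteq> D"
    and u: "u \<in> cspan J (\<phi> ` {1..j})" "tnorm J A t u = 1"
  shows "Re (a2 J A t (u - form_proj (b_minus J D A t) L u) (u - form_proj (b_minus J D A t) L u))
           \<le> (\<Sum>k=1..j. (form_norm (b_minus J D A t)
                            (\<phi> k - form_proj (b_minus J D A t) L (\<phi> k)))\<^sup>2)
       \<and> Re (a2 J A t (u - form_proj (b_plus J D A t) L u) (u - form_proj (b_plus J D A t) L u))
           \<le> (\<Sum>k=1..j. (form_norm (b_plus J D A t)
                            (\<phi> k - form_proj (b_plus J D A t) L (\<phi> k)))\<^sup>2)"
  proof (rule conjI)
  show "Re (a2 J A t (u - form_proj (b_minus J D A t) L u) (u - form_proj (b_minus J D A t) L u))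
           \<le> (\<Sum>k=1..j. (form_norm (b_minus J D A t)
                            (\<phi> k - form_proj (b_minus J D A t) L (\<phi> k)))\<^sup>2)"
    by (rule lemma4p3_aux[OF J sa eig orth t_notin L u, where s=1 and c="1 - mu_minus J D A t"]) simp_all
  show "Re (a2 J A t (u - form_proj (b_plus J D A t) L u) (u - form_proj (b_plus J D A t) L u))
           \<le> (\<Sum>k=1..j. (form_norm (b_plus J D A t)
                            (\<phi> k - form_proj (b_plus J D A t) L (\<phi> k)))\<^sup>2)"
    by (rule lemma4p3_aux[OF J sa eig orth t_notin L u, where s="-1" and c="1 + mu_plus J D A t"]) simp_all
qed

end
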